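(* Let $\hat\sigma_1,\hat\sigma_2,\hat\sigma_3$ be the Pauli matrices and, for arbitrary $\alpha_1,\alpha_2,\alpha_3\in\mathbb{R}$, let $$\Omega = e^{-i(\alpha_1\hat\sigma_1\otimes\hat\sigma_1+\alpha_2\hat\sigma_2\otimes\hat\sigma_2+\alpha_3\hat\sigma_3\otimes\hat\sigma_3)}.$$ Let $\rho^{SE}_D$ be any two-qubit density operator whose correlation matrix $t_{ij}=\operatorname{Tr}(\rho^{SE}_D\,\hat\sigma_i\otimes\hat\sigma_j)$ is diagonal, and let $\rho^S=\operatorname{Tr}_E\rho^{SE}_D$. Then there exists a single-qubit density operator $\zeta^E$ such that $$\operatorname{Tr}_E\big(\Omega\rho^{SE}_D\Omega^\dagger\big)=\operatorname{Tr}_E\big(\Omega(\rho^S\otimes\zeta^E)\Omega^\dagger\big),$$ i.e. the system dynamics are $U$-generated by a product state for $U=\Omega$.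
   Context: A two-qubit state is written $\rho^{SE}=\tfrac14\big(\mathbb{I}\otimes\mathbb{I}+\vec a\cdot\vec\sigma\otimes\mathbb{I}+\mathbb{I}\otimes\vec b\cdot\vec\sigma+\sum_{i,j}t_{ij}\hat\sigma_i\otimes\hat\sigma_j\big)$, where $(t_{ij})$ is its correlation matrix. "$U$-generated by a product state" means existence of a valid environment state $\zeta^E$ with $\operatorname{Tr}_E(U\rho^{SE}U^\dagger)=\operatorname{Tr}_E(U(\rho^S\otimes\zeta^E)U^\dagger)$. *)

theory Defs
  imports "HOL-Analysis.Analysis"
begin

text \<open>Qubit: index type 2 (basis states 0 and 1). Two-qubit system S (first factor) and
  environment E (second factor): index type 2 \<times> 2.\<close>

type_synonym qmat = "complex^2^2"
type_synonym qqmat = "complex^(2 \<times> 2)^(2 \<times> 2)"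

definition pauli :: "nat \<Rightarrow> qmat" where
  "pauli k = (\<chi> i j.
     if k = 1 then (if i \<noteq> j then 1 else 0)
     else if k = 2 then (if i = j then 0 else if i = 0 then - \<i> else \<i>)
     else if k = 3 then (if i \<noteq> j then 0 else if i = 0 then 1 else -1)
     else 0)"

definition kron :: "complex^'n::finite^'m::finite \<Rightarrow> complex^'q::finite^'p::finite \<Rightarrow> complex^('n \<times> 'q)^('m \<times> 'p)" where
  "kron A B = (\<chi> r c. A$(fst r)$(fst c) * B$(snd r)$(snd c))"

definition ptrace_E :: "complex^('n::finite \<times> 'q::finite)^('n \<times> 'q) \<Rightarrow> complex^'n^'n" where
  "ptrace_E R = (\<chi> i j. \<Sum>k\<in>UNIV. R$(i,k)$(j,k))"

definition adjoint_mat :: "complex^'n^'m \<Rightarrow> complex^'m^'n" where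
  "adjoint_mat A = (\<chi> i j. cnj (A$j$i))"

definition cscale :: "complex \<Rightarrow> complex^'n^'m \<Rightarrow> complex^'n^'m" where
  "cscale c A = (\<chi> i j. c * A$i$j)"

primrec mpow :: "complex^'n^'n \<Rightarrow> nat \<Rightarrow> complex^'n^'n" where
  "mpow A 0 = mat 1"
| "mpow A (Suc n) = A ** mpow A n"

definition mexp :: "complex^'n^'n \<Rightarrow> complex^'n^'n" where
  "mexp A = (\<chi> i j. \<Sum>n. (mpow A n)$i$j / of_nat (fact n))"

definition psd :: "complex^'n^'n \<Rightarrow> bool" where
  "psd A \<longleftrightarrow> (\<forall>v::complex^'n. let q = (\<Sum>i\<in>UNIV. \<Sum>j\<in>UNIV. cnj (v$i) * A$i$j * v$j)
                                in Im q = 0 \<and> Re q \<ge> 0)"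

definition density :: "complex^'n^'n \<Rightarrow> bool" where
  "density A \<longleftrightarrow> psd A \<and> trace A = 1"

definition corr :: "qqmat \<Rightarrow> nat \<Rightarrow> nat \<Rightarrow> complex" where
  "corr \<rho> i j = trace (\<rho> ** kron (pauli i) (pauli j))"

definition Omega :: "real \<Rightarrow> real \<Rightarrow> real \<Rightarrow> qqmat" where
  "Omega a1 a2 a3 = mexp (cscale (- \<i>)
      (cscale (complex_of_real a1) (kron (pauli 1) (pauli 1))
     + cscale (complex_of_real a2) (kron (pauli 2) (pauli 2))
     + cscale (complex_of_real a3) (kron (pauli 3) (pauli 3))))"

end

theory Submission
  imports Defs
begin

lemma ex2: "(x::2) = 0 \<or> x = 1"
  by (metis exhaust_2 zero_neq_one)
lemma UNIV2: "(UNIV::2 set) = {0,1}" using ex2 by auto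
lemma sum2: "sum f (UNIV::2 set) = f 0 + f 1"
  by (simp add: UNIV2)
lemma UNIV22: "(UNIV::(2\<times>2) set) = {(0,0),(0,1),(1,0),(1,1)}"
  using ex2 by auto
lemma sum22: "sum f (UNIV::(2\<times>2) set) = f (0,0) + f (0,1) + f (1,0) + f (1,1)"
  by (simp add: UNIV22 add.assoc)

lemma veqI: "(\<And>i. x$i = y$i) \<Longrightarrow> x = y" by (simp add: vec_eq_iff)

lemma c22: fixes x :: "2\<times>2" obtains "x = (0,0)" | "x = (0,1)" | "x = (1,0)" | "x = (1,1)"
  by (metis ex2 prod.collapse)

definition blkm :: "complex \<Rightarrow> complex \<Rightarrow> complex \<Rightarrow> complex \<Rightarrow> qqmat" where
  "blkm f1 g1 f2 g2 = (\<chi> r c. if (fst r = snd r) = (fst c = snd c) then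
     (if fst r = snd r then (if r = c then f1 else g1) else (if r = c then f2 else g2)) else 0)"

lemma blkm_mult: "blkm f1 g1 f2 g2 ** blkm h1 k1 h2 k2
   = blkm (f1*h1+g1*k1) (f1*k1+g1*h1) (f2*h2+g2*k2) (f2*k2+g2*h2)"
  apply (intro veqI) subgoal for r c
  by (cases r rule: c22; cases c rule: c22; simp add: matrix_matrix_mult_def blkm_def sum22 algebra_simps) done

lemma blkm_one: "mat 1 = blkm 1 0 1 0"
  apply (intro veqI) subgoal for r c
  by (cases r rule: c22; cases c rule: c22; simp add: mat_def blkm_def) done

lemma blkm_adj: "adjoint_mat (blkm f1 g1 f2 g2) = blkm (cnj f1) (cnj g1) (cnj f2) (cnj g2)"
  apply (intro veqI) subgoal for r c
  by (cases r rule: c22; cases c rule: c22; simp add: adjoint_mat_def blkm_def) done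

definition Hm :: "real \<Rightarrow> real \<Rightarrow> real \<Rightarrow> qqmat" where
 "Hm a1 a2 a3 = (cscale (- \<i>)
      (cscale (complex_of_real a1) (kron (pauli 1) (pauli 1))
     + cscale (complex_of_real a2) (kron (pauli 2) (pauli 2))
     + cscale (complex_of_real a3) (kron (pauli 3) (pauli 3))))"

lemma Hm_blk: "Hm a1 a2 a3 = blkm (-\<i>*a3) (-\<i>*(a1-a2)) (\<i>*a3) (-\<i>*(a1+a2))"
  apply (intro veqI) subgoal for r c
  by (cases r rule: c22; cases c rule: c22; simp add: Hm_def blkm_def cscale_def kron_def pauli_def algebra_simps) done

definition gd :: "complex \<Rightarrow> complex \<Rightarrow> nat \<Rightarrow> complex" where
  "gd p q n = ((p+q)^n + (p-q)^n)/2"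
definition go :: "complex \<Rightarrow> complex \<Rightarrow> nat \<Rightarrow> complex" where
  "go p q n = ((p+q)^n - (p-q)^n)/2"

lemma mpow_blk: "mpow (blkm p q p' q') n = blkm (gd p q n) (go p q n) (gd p' q' n) (go p' q' n)"
proof (induction n)
  case 0 then show ?case by (simp add: blkm_one gd_def go_def)
next
  case (Suc n) then show ?case
    by (simp add: blkm_mult gd_def go_def algebra_simps add_divide_distrib diff_divide_distrib)
qed

lemma exp_sums_c: "(\<lambda>n. (x::complex)^n / fact n) sums exp x"
  using exp_converges[of x] by (simp add: scaleR_conv_of_real divide_inverse mult.commute)

lemma gd_sums: "(\<lambda>n. gd p q n / fact n) sums ((exp (p+q) + exp (p-q))/2)"
proof -
  have "(\<lambda>n. ((p+q)^n / fact n + (p-q)^n / fact n)/2) sums ((exp (p+q) + exp (p-q))/2)"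
    by (intro sums_divide sums_add exp_sums_c)
  then show ?thesis by (simp add: gd_def add_divide_distrib mult.commute)
qed

lemma go_sums: "(\<lambda>n. go p q n / fact n) sums ((exp (p+q) - exp (p-q))/2)"
proof -
  have "(\<lambda>n. ((p+q)^n / fact n - (p-q)^n / fact n)/2) sums ((exp (p+q) - exp (p-q))/2)"
    by (intro sums_divide sums_diff exp_sums_c)
  then show ?thesis by (simp add: go_def diff_divide_distrib mult.commute)
qed

lemma mexp_blk: "mexp (blkm p q p' q') = blkm ((exp (p+q) + exp (p-q))/2) ((exp (p+q) - exp (p-q))/2)
   ((exp (p'+q') + exp (p'-q'))/2) ((exp (p'+q') - exp (p'-q'))/2)"
  apply (intro veqI) subgoal for r c
  unfolding mexp_def mpow_blk by (cases r rule: c22; cases c rule: c22; simp add: blkm_def sums_unique[OF gd_sums, symmetric] sums_unique[OF go_sums, symmetric]) done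

lemma exp_ic1: "exp (\<i> * complex_of_real t) = cis t" by (simp add: cis_conv_exp)
lemma exp_ic2: "exp (- \<i> * complex_of_real t) = cis (-t)" by (simp add: cis_conv_exp)

lemma E1: "(exp (-\<i>* of_real t + -\<i>* of_real w) + exp (-\<i>* of_real t - -\<i>* of_real w))/2 = cis (-t) * of_real (cos w)"
proof -
  have "-\<i>* of_real t + -\<i>* of_real w = \<i> * of_real (-t-w)" "-\<i>* of_real t - -\<i>* of_real w = \<i> * of_real (w-t)"
    by (simp_all add: algebra_simps)
  then show ?thesis by (simp only: exp_ic1) (simp add: complex_eq_iff cos_diff sin_diff cos_add sin_add)
qed
lemma E2: "(exp (-\<i>* of_real t + -\<i>* of_real w) - exp (-\<i>* of_real t - -\<i>* of_real w))/2 = -\<i> * cis (-t) * of_real (sin w)"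
proof -
  have "-\<i>* of_real t + -\<i>* of_real w = \<i> * of_real (-t-w)" "-\<i>* of_real t - -\<i>* of_real w = \<i> * of_real (w-t)"
    by (simp_all add: algebra_simps)
  then show ?thesis by (simp only: exp_ic1) (simp add: complex_eq_iff cos_diff sin_diff cos_add sin_add)
qed
lemma E3: "(exp (\<i>* of_real t + -\<i>* of_real w) + exp (\<i>* of_real t - -\<i>* of_real w))/2 = cis t * of_real (cos w)"
proof -
  have "\<i>* of_real t + -\<i>* of_real w = \<i> * of_real (t-w)" "\<i>* of_real t - -\<i>* of_real w = \<i> * of_real (t+w)"
    by (simp_all add: algebra_simps)
  then show ?thesis by (simp only: exp_ic1) (simp add: complex_eq_iff cos_diff sin_diff cos_add sin_add)
qed
lemma E4: "(exp (\<i>* of_real t + -\<i>* of_real w) - exp (\<i>* of_real t - -\<i>* of_real w))/2 = -\<i> * cis t * of_real (sin w)"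
proof -
  have "\<i>* of_real t + -\<i>* of_real w = \<i> * of_real (t-w)" "\<i>* of_real t - -\<i>* of_real w = \<i> * of_real (t+w)"
    by (simp_all add: algebra_simps)
  then show ?thesis by (simp only: exp_ic1) (simp add: complex_eq_iff cos_diff sin_diff cos_add sin_add)
qed

lemma Om_explicit: "Omega a1 a2 a3 = blkm (cis (-a3) * cos (a1-a2)) (-\<i> * cis (-a3) * sin (a1-a2))
    (cis a3 * cos (a1+a2)) (-\<i> * cis a3 * sin (a1+a2))"
proof -
  have "Omega a1 a2 a3 = mexp (Hm a1 a2 a3)" by (simp add: Omega_def Hm_def)
  then show ?thesis
    unfolding Hm_blk mexp_blk E1 E2 E3 E4 .
qed

definition st :: "(nat \<Rightarrow> real) \<Rightarrow> (nat \<Rightarrow> real) \<Rightarrow> (nat \<Rightarrow> nat \<Rightarrow> real) \<Rightarrow> qqmat" where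
  "st a b T = (\<chi> r c. (1/4) * ((if r = c then 1 else 0)
     + (\<Sum>i\<in>{1,2,3}. a i * pauli i $ fst r $ fst c * (if snd r = snd c then 1 else 0))
     + (\<Sum>i\<in>{1,2,3}. b i * pauli i $ snd r $ snd c * (if fst r = fst c then 1 else 0))
     + (\<Sum>i\<in>{1,2,3}. \<Sum>j\<in>{1,2,3}. T i j * pauli i $ fst r $ fst c * pauli j $ snd r $ snd c)))"

definition bl :: "real \<Rightarrow> real \<Rightarrow> real \<Rightarrow> qmat" where
  "bl p1 p2 p3 = (\<chi> i j. if i = 0 then (if j = 0 then (1 + p3)/2 else (p1 - \<i>*p2)/2)
      else (if j = 0 then (p1 + \<i>*p2)/2 else (1 - p3)/2))"

definition flip :: "2\<times>2 \<Rightarrow> 2\<times>2" where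
  "flip r = (if fst r = 0 then 1 else 0, if snd r = 0 then 1 else 0)"

lemma blk_left: "(blkm f1 g1 f2 g2 ** X) $ r $ c = (if fst r = snd r then f1 else f2) * X$r$c
   + (if fst r = snd r then g1 else g2) * X$(flip r)$c"
  by (cases r rule: c22; simp add: matrix_matrix_mult_def sum22 blkm_def flip_def)

lemma blk_right: "(Y ** blkm f1 g1 f2 g2) $ r $ c = Y$r$c * (if fst c = snd c then f1 else f2)
   + Y$r$(flip c) * (if fst c = snd c then g1 else g2)"
  by (cases c rule: c22; simp add: matrix_matrix_mult_def sum22 blkm_def flip_def)

lemma st_ent: "st a b T $ r $ c = (1/4) * ((if r = c then 1 else 0)
     + (\<Sum>i\<in>{1,2,3}. a i * pauli i $ fst r $ fst c * (if snd r = snd c then 1 else 0))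
     + (\<Sum>i\<in>{1,2,3}. b i * pauli i $ snd r $ snd c * (if fst r = fst c then 1 else 0))
     + (\<Sum>i\<in>{1,2,3}. \<Sum>j\<in>{1,2,3}. T i j * pauli i $ fst r $ fst c * pauli j $ snd r $ snd c))"
  by (simp add: st_def)

definition OmA :: "real \<Rightarrow> real \<Rightarrow> real \<Rightarrow> real \<Rightarrow> real \<Rightarrow> real \<Rightarrow> qqmat" where
  "OmA x y u v c s = blkm (Complex c (-s) * x) (-\<i> * Complex c (-s) * y) (Complex c s * u) (-\<i> * Complex c s * v)"

lemma c2: fixes x :: 2 obtains "x = 0" | "x = 1" using ex2 by blast

definition st4 :: "(nat \<Rightarrow> real) \<Rightarrow> (nat \<Rightarrow> real) \<Rightarrow> (nat \<Rightarrow> nat \<Rightarrow> real) \<Rightarrow> qqmat" where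
  "st4 a b T = (\<chi> r c. ((if r = c then 1 else 0)
     + (\<Sum>i\<in>{1,2,3}. a i * pauli i $ fst r $ fst c * (if snd r = snd c then 1 else 0))
     + (\<Sum>i\<in>{1,2,3}. b i * pauli i $ snd r $ snd c * (if fst r = fst c then 1 else 0))
     + (\<Sum>i\<in>{1,2,3}. \<Sum>j\<in>{1,2,3}. T i j * pauli i $ fst r $ fst c * pauli j $ snd r $ snd c)))"

definition blu :: "real \<Rightarrow> real \<Rightarrow> real \<Rightarrow> qmat" where
  "blu p1 p2 p3 = (\<chi> i j. if i = 0 then (if j = 0 then (1 + p3) else (p1 - \<i> * p2))
      else (if j = 0 then (p1 + \<i> * p2) else (1 - p3)))"

lemma core4_00:
  fixes x y u v c s :: real
  assumes "x^2+y^2=1" "u^2+v^2=1" "c^2+s^2=1"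
  shows "ptrace_E (OmA x y u v c s ** st4 a b T ** adjoint_mat (OmA x y u v c s)) $ 0 $ 0
    = 2 * blu ((u * x + v * y) * (c^2 - s^2) * a 1 + (v * x - u * y) * (c^2 - s^2) * T 3 2 - (2 * s * c) * (u * x + v * y) * T 2 3 + (v * x - u * y) * (2 * s * c) * b 1) ((c^2 - s^2) * (u * x - v * y) * a 2 + (2 * s * c) * (u * x - v * y) * T 1 3 - (v * x + u * y) * (c^2 - s^2) * T 3 1 + (2 * s * c) * (v * x + u * y) * b 2) ((u * x - v * y) * (u * x + v * y) * a 3 + (v * x + u * y) * (u * x + v * y) * T 2 1 - (v * x - u * y) * (u * x - v * y) * T 1 2 + (v * x + u * y) * (v * x - u * y) * b 3) $ 0 $ 0"
  using assms
  apply (simp add: blu_def OmA_def blkm_adj ptrace_E_def sum2 blk_left blk_right flip_def st4_def pauli_def complex_eq_iff)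
  apply (intro conjI)
   apply algebra
  apply (simp add: algebra_simps)
  done

lemma core4_01:
  fixes x y u v c s :: real
  assumes "x^2+y^2=1" "u^2+v^2=1" "c^2+s^2=1"
  shows "ptrace_E (OmA x y u v c s ** st4 a b T ** adjoint_mat (OmA x y u v c s)) $ 0 $ 1
    = 2 * blu ((u * x + v * y) * (c^2 - s^2) * a 1 + (v * x - u * y) * (c^2 - s^2) * T 3 2 - (2 * s * c) * (u * x + v * y) * T 2 3 + (v * x - u * y) * (2 * s * c) * b 1) ((c^2 - s^2) * (u * x - v * y) * a 2 + (2 * s * c) * (u * x - v * y) * T 1 3 - (v * x + u * y) * (c^2 - s^2) * T 3 1 + (2 * s * c) * (v * x + u * y) * b 2) ((u * x - v * y) * (u * x + v * y) * a 3 + (v * x + u * y) * (u * x + v * y) * T 2 1 - (v * x - u * y) * (u * x - v * y) * T 1 2 + (v * x + u * y) * (v * x - u * y) * b 3) $ 0 $ 1"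
  using assms
  apply (simp add: blu_def OmA_def blkm_adj ptrace_E_def sum2 blk_left blk_right flip_def st4_def pauli_def complex_eq_iff)
  apply (intro conjI)
   apply (simp add: algebra_simps power2_eq_square)
  apply (simp add: algebra_simps power2_eq_square)
  done

lemma core4_10:
  fixes x y u v c s :: real
  assumes "x^2+y^2=1" "u^2+v^2=1" "c^2+s^2=1"
  shows "ptrace_E (OmA x y u v c s ** st4 a b T ** adjoint_mat (OmA x y u v c s)) $ 1 $ 0
    = 2 * blu ((u * x + v * y) * (c^2 - s^2) * a 1 + (v * x - u * y) * (c^2 - s^2) * T 3 2 - (2 * s * c) * (u * x + v * y) * T 2 3 + (v * x - u * y) * (2 * s * c) * b 1) ((c^2 - s^2) * (u * x - v * y) * a 2 + (2 * s * c) * (u * x - v * y) * T 1 3 - (v * x + u * y) * (c^2 - s^2) * T 3 1 + (2 * s * c) * (v * x + u * y) * b 2) ((u * x - v * y) * (u * x + v * y) * a 3 + (v * x + u * y) * (u * x + v * y) * T 2 1 - (v * x - u * y) * (u * x - v * y) * T 1 2 + (v * x + u * y) * (v * x - u * y) * b 3) $ 1 $ 0"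
  using assms
  apply (simp add: blu_def OmA_def blkm_adj ptrace_E_def sum2 blk_left blk_right flip_def st4_def pauli_def complex_eq_iff)
  apply (intro conjI)
   apply (simp add: algebra_simps power2_eq_square)
  apply (simp add: algebra_simps power2_eq_square)
  done

lemma core4_11:
  fixes x y u v c s :: real
  assumes "x^2+y^2=1" "u^2+v^2=1" "c^2+s^2=1"
  shows "ptrace_E (OmA x y u v c s ** st4 a b T ** adjoint_mat (OmA x y u v c s)) $ 1 $ 1
    = 2 * blu ((u * x + v * y) * (c^2 - s^2) * a 1 + (v * x - u * y) * (c^2 - s^2) * T 3 2 - (2 * s * c) * (u * x + v * y) * T 2 3 + (v * x - u * y) * (2 * s * c) * b 1) ((c^2 - s^2) * (u * x - v * y) * a 2 + (2 * s * c) * (u * x - v * y) * T 1 3 - (v * x + u * y) * (c^2 - s^2) * T 3 1 + (2 * s * c) * (v * x + u * y) * b 2) ((u * x - v * y) * (u * x + v * y) * a 3 + (v * x + u * y) * (u * x + v * y) * T 2 1 - (v * x - u * y) * (u * x - v * y) * T 1 2 + (v * x + u * y) * (v * x - u * y) * b 3) $ 1 $ 1"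
  using assms
  apply (simp add: blu_def OmA_def blkm_adj ptrace_E_def sum2 blk_left blk_right flip_def st4_def pauli_def complex_eq_iff)
  apply (intro conjI)
   apply algebra
  apply (simp add: algebra_simps)
  done

lemma cscale_mult_left: "(A ** cscale k X) = cscale k (A ** X)"
  by (simp add: vec_eq_iff matrix_matrix_mult_def cscale_def sum_distrib_left mult.left_commute)
lemma cscale_mult_right: "(cscale k Y ** B) = cscale k (Y ** B)"
  by (simp add: vec_eq_iff matrix_matrix_mult_def cscale_def sum_distrib_left mult.assoc)
lemma ptrace_cscale: "ptrace_E (cscale k Z) = cscale k (ptrace_E Z)"
  by (simp add: vec_eq_iff ptrace_E_def cscale_def sum_distrib_left)
lemma cscale_cscale: "cscale k (cscale l Z) = cscale (k*l) Z"
  by (simp add: vec_eq_iff cscale_def mult.assoc)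
lemma st_st4: "st a b T = cscale (1/4) (st4 a b T)"
  by (simp add: vec_eq_iff st_def st4_def cscale_def)
lemma bl_blu: "bl p1 p2 p3 = cscale (1/2) (blu p1 p2 p3)"
  apply (intro veqI) subgoal for i j
  by (cases i rule: c2; cases j rule: c2; simp add: bl_def blu_def cscale_def) done

lemma core:
  fixes x y u v c s :: real
  assumes "x^2+y^2=1" "u^2+v^2=1" "c^2+s^2=1"
  shows "ptrace_E (OmA x y u v c s ** st a b T ** adjoint_mat (OmA x y u v c s))
    = bl ((u * x + v * y) * (c^2 - s^2) * a 1 + (v * x - u * y) * (c^2 - s^2) * T 3 2 - (2 * s * c) * (u * x + v * y) * T 2 3 + (v * x - u * y) * (2 * s * c) * b 1) ((c^2 - s^2) * (u * x - v * y) * a 2 + (2 * s * c) * (u * x - v * y) * T 1 3 - (v * x + u * y) * (c^2 - s^2) * T 3 1 + (2 * s * c) * (v * x + u * y) * b 2) ((u * x - v * y) * (u * x + v * y) * a 3 + (v * x + u * y) * (u * x + v * y) * T 2 1 - (v * x - u * y) * (u * x - v * y) * T 1 2 + (v * x + u * y) * (v * x - u * y) * b 3)"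
proof -
  have "ptrace_E (OmA x y u v c s ** st4 a b T ** adjoint_mat (OmA x y u v c s)) = cscale 2 (blu ((u * x + v * y) * (c^2 - s^2) * a 1 + (v * x - u * y) * (c^2 - s^2) * T 3 2 - (2 * s * c) * (u * x + v * y) * T 2 3 + (v * x - u * y) * (2 * s * c) * b 1) ((c^2 - s^2) * (u * x - v * y) * a 2 + (2 * s * c) * (u * x - v * y) * T 1 3 - (v * x + u * y) * (c^2 - s^2) * T 3 1 + (2 * s * c) * (v * x + u * y) * b 2) ((u * x - v * y) * (u * x + v * y) * a 3 + (v * x + u * y) * (u * x + v * y) * T 2 1 - (v * x - u * y) * (u * x - v * y) * T 1 2 + (v * x + u * y) * (v * x - u * y) * b 3))"
    apply (intro veqI) subgoal for i j
    by (cases i rule: c2; cases j rule: c2; simp only: cscale_def vec_lambda_beta core4_00[OF assms] core4_01[OF assms] core4_10[OF assms] core4_11[OF assms])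
    done
  then show ?thesis
    unfolding st_st4 bl_blu cscale_mult_left cscale_mult_right ptrace_cscale by (simp add: cscale_cscale)
qed
definition qf :: "complex^'n^'n \<Rightarrow> complex^'n \<Rightarrow> complex" where
  "qf A v = (\<Sum>i\<in>UNIV. \<Sum>j\<in>UNIV. cnj (v$i) * A$i$j * v$j)"

lemma psd_qf: "psd A \<Longrightarrow> Im (qf A v) = 0 \<and> Re (qf A v) \<ge> 0"
  unfolding psd_def qf_def Let_def by blast

lemma sd: fixes f :: "'n::finite \<Rightarrow> complex" shows "(\<Sum>j\<in>UNIV. f j * (if j = p then 1 else 0)) = (f p :: complex)"
proof -
  have "(\<Sum>j\<in>UNIV. f j * (if j = p then 1 else 0)) = (\<Sum>j\<in>UNIV. if j = p then f j else 0)"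
    by (rule sum.cong) auto
  also have "\<dots> = f p" by (simp add: sum.delta)
  finally show ?thesis .
qed

lemma sd2: fixes f :: "'n::finite \<Rightarrow> complex" shows "(\<Sum>j\<in>UNIV. (if j = p then 1 else 0) * f j) = (f p :: complex)"
  using sd[of f p] by (simp add: mult.commute)

lemma cnj_if01: "cnj (if P then 1 else 0) = (if P then 1 else 0)" by simp

lemma qf_two:
  fixes A :: "complex^'n::finite^'n"
  shows "qf A (\<chi> k. (if k = p then 1 else 0) + w * (if k = q then 1 else 0))
     = A$p$p + w * A$p$q + cnj w * A$q$p + cnj w * w * A$q$q"
proof -
  define v :: "complex^'n" where "v = (\<chi> k. (if k = p then 1 else 0) + w * (if k = q then 1 else 0))"
  have inner: "(\<Sum>j\<in>UNIV. A$i$j * v$j) = A$i$p + w * A$i$q" for i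
  proof -
    have "(\<Sum>j\<in>UNIV. A$i$j * v$j) = (\<Sum>j\<in>UNIV. A$i$j * (if j = p then 1 else 0)) + w * (\<Sum>j\<in>UNIV. A$i$j * (if j = q then 1 else 0))"
      by (simp add: v_def distrib_left sum.distrib sum_distrib_left mult.left_commute)
    then show ?thesis by (simp only: sd)
  qed
  have "qf A v = (\<Sum>i\<in>UNIV. cnj (v$i) * (\<Sum>j\<in>UNIV. A$i$j * v$j))"
    by (simp add: qf_def sum_distrib_left mult.assoc)
  also have "\<dots> = (\<Sum>i\<in>UNIV. cnj (v$i) * (A$i$p + w * A$i$q))" by (simp only: inner)
  also have "\<dots> = (\<Sum>i\<in>UNIV. (if i = p then 1 else 0) * (A$i$p + w * A$i$q)) + cnj w * (\<Sum>i\<in>UNIV. (if i = q then 1 else 0) * (A$i$p + w * A$i$q))"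
    by (simp add: v_def cnj_if01 distrib_right sum.distrib sum_distrib_left mult.assoc)
  also have "\<dots> = A$p$p + w * A$p$q + cnj w * A$q$p + cnj w * w * A$q$q"
    by (simp only: sd2) (simp add: algebra_simps)
  finally show ?thesis unfolding v_def .
qed

lemma qf_one:
  fixes A :: "complex^'n::finite^'n"
  shows "qf A (\<chi> k. (if k = p then 1 else 0)) = A$p$p"
proof -
  have "qf A (\<chi> k. (if k = p then 1 else 0)) = qf A (\<chi> k. (if k = p then 1 else 0) + 0 * (if k = p then 1 else 0))"
    by simp
  also have "\<dots> = A$p$p" by (simp only: qf_two) simp
  finally show ?thesis .
qed

lemma psd_herm:
  fixes A :: "complex^'n::finite^'n"
  assumes "psd A"
  shows "A$q$p = cnj (A$p$q)"
proof (cases "p = q")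
  case True
  have "Im (A$p$p) = 0" using conjunct1[OF psd_qf[OF assms, of "\<chi> k. (if k = p then 1 else 0)"], unfolded qf_one] .
  then show ?thesis using True by (simp add: complex_eq_iff)
next
  case False
  have d1: "Im (A$p$p) = 0" using conjunct1[OF psd_qf[OF assms, of "\<chi> k. (if k = p then 1 else 0)"], unfolded qf_one] .
  have d2: "Im (A$q$q) = 0" using conjunct1[OF psd_qf[OF assms, of "\<chi> k. (if k = q then 1 else 0)"], unfolded qf_one] .
  have h1: "Im (A$p$p + 1 * A$p$q + cnj 1 * A$q$p + cnj 1 * 1 * A$q$q) = 0"
    using conjunct1[OF psd_qf[OF assms, of "\<chi> k. (if k = p then 1 else 0) + 1 * (if k = q then 1 else 0)"], unfolded qf_two] .
  have h2: "Im (A$p$p + \<i> * A$p$q + cnj \<i> * A$q$p + cnj \<i> * \<i> * A$q$q) = 0"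
    using conjunct1[OF psd_qf[OF assms, of "\<chi> k. (if k = p then 1 else 0) + \<i> * (if k = q then 1 else 0)"], unfolded qf_two] .
  show ?thesis using d1 d2 h1 h2 by (simp add: complex_eq_iff)
qed

definition aof :: "qqmat \<Rightarrow> nat \<Rightarrow> real" where
  "aof \<rho> i = Re (trace (\<rho> ** kron (pauli i) (mat 1)))"
definition bof :: "qqmat \<Rightarrow> nat \<Rightarrow> real" where
  "bof \<rho> i = Re (trace (\<rho> ** kron (mat 1) (pauli i)))"
definition Tof :: "qqmat \<Rightarrow> nat \<Rightarrow> nat \<Rightarrow> real" where
  "Tof \<rho> i j = (if i = j then Re (corr \<rho> i i) else 0)"

lemma decomp:
  assumes h: "\<And>p q. \<rho>$q$p = cnj (\<rho>$p$q)" and tr: "trace \<rho> = 1"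
    and c12: "corr \<rho> 1 2 = 0" and c13: "corr \<rho> 1 3 = 0" and c21: "corr \<rho> 2 1 = 0"
    and c23: "corr \<rho> 2 3 = 0" and c31: "corr \<rho> 3 1 = 0" and c32: "corr \<rho> 3 2 = 0"
  shows "\<rho> = st (aof \<rho>) (bof \<rho>) (Tof \<rho>)"
proof -
  have hs: "\<rho>$(0,1)$(0,0) = cnj (\<rho>$(0,0)$(0,1))" "\<rho>$(1,0)$(0,0) = cnj (\<rho>$(0,0)$(1,0))"
    "\<rho>$(1,1)$(0,0) = cnj (\<rho>$(0,0)$(1,1))" "\<rho>$(1,0)$(0,1) = cnj (\<rho>$(0,1)$(1,0))"
    "\<rho>$(1,1)$(0,1) = cnj (\<rho>$(0,1)$(1,1))" "\<rho>$(1,1)$(1,0) = cnj (\<rho>$(1,0)$(1,1))"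
    by (rule h)+
  have d: "Im (\<rho>$x$x) = 0" for x using h[of x x] by (simp add: complex_eq_iff)
  note D = d[of "(0,0)"] d[of "(0,1)"] d[of "(1,0)"] d[of "(1,1)"]
  have E: "Re (trace \<rho>) = 1" "Re (corr \<rho> 1 2) = 0" "Im (corr \<rho> 1 2) = 0"
     "Re (corr \<rho> 1 3) = 0" "Im (corr \<rho> 1 3) = 0" "Re (corr \<rho> 2 1) = 0" "Im (corr \<rho> 2 1) = 0"
     "Re (corr \<rho> 2 3) = 0" "Im (corr \<rho> 2 3) = 0" "Re (corr \<rho> 3 1) = 0" "Im (corr \<rho> 3 1) = 0"
     "Re (corr \<rho> 3 2) = 0" "Im (corr \<rho> 3 2) = 0"
    using tr c12 c13 c21 c23 c31 c32 by simp_all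
  note E' = E[unfolded corr_def trace_def matrix_matrix_mult_def kron_def pauli_def mat_def, simplified sum22 sum2 hs, simplified]
  show ?thesis
    apply (intro veqI) subgoal for r c
    using E' D
    by (cases r rule: c22; cases c rule: c22; simp add: st_ent pauli_def aof_def bof_def Tof_def corr_def trace_def
      matrix_matrix_mult_def kron_def mat_def sum22 sum2 hs complex_eq_iff; linarith?)
    done
qed

lemma bnorm:
  assumes "psd (st a b T)"
  shows "(b 1)^2 + (b 2)^2 + (b 3)^2 \<le> 1"
proof -
  define A where "A = (1 + b 3)/2"
  define D where "D = (1 - b 3)/2"
  define B :: complex where "B = Complex (b 1 / 2) (- b 2 / 2)"
  define v1 where "v1 k = (\<chi> r::2\<times>2. if fst r = k then (if snd r = 0 then - B else complex_of_real A) else 0)" for k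
  define v2 where "v2 k = (\<chi> r::2\<times>2. if fst r = k then (if snd r = 0 then complex_of_real D else - cnj B) else 0)" for k
  have q1: "Re (qf (st a b T) (v1 0)) + Re (qf (st a b T) (v1 1)) \<ge> 0"
    using psd_qf[OF assms] by (meson add_nonneg_nonneg)
  have q2: "Re (qf (st a b T) (v2 0)) + Re (qf (st a b T) (v2 1)) \<ge> 0"
    using psd_qf[OF assms] by (meson add_nonneg_nonneg)
  have e1: "Re (qf (st a b T) (v1 0)) + Re (qf (st a b T) (v1 1)) = A * (A*D - ((b 1)^2 + (b 2)^2)/4)"
    by (simp add: qf_def sum22 st_ent pauli_def v1_def A_def D_def B_def power2_eq_square field_simps)
  have e2: "Re (qf (st a b T) (v2 0)) + Re (qf (st a b T) (v2 1)) = D * (A*D - ((b 1)^2 + (b 2)^2)/4)"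
    by (simp add: qf_def sum22 st_ent pauli_def v2_def A_def D_def B_def power2_eq_square field_simps)
  have "A*D - ((b 1)^2 + (b 2)^2)/4 \<ge> 0"
  proof (cases "b 3 \<ge> 0")
    case True
    then have "A > 0" by (simp add: A_def)
    then show ?thesis using q1 e1 by (simp add: zero_le_mult_iff)
  next
    case False
    then have "D > 0" by (simp add: D_def)
    then show ?thesis using q2 e2 by (simp add: zero_le_mult_iff)
  qed
  then show ?thesis by (simp add: A_def D_def field_simps power2_eq_square)
qed

lemma cs3:
  fixes z1 z2 z3 W1 W2 W3 N :: real
  assumes "z1^2+z2^2+z3^2 \<le> 1" "W1^2+W2^2+W3^2 \<le> N^2" "N \<ge> 0"
  shows "N + z1*W1 + z2*W2 + z3*W3 \<ge> 0"
proof -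
  have "(z1*W1+z2*W2+z3*W3)^2 \<le> (z1^2+z2^2+z3^2)*(W1^2+W2^2+W3^2)"
  proof -
    have "(z1^2+z2^2+z3^2)*(W1^2+W2^2+W3^2) - (z1*W1+z2*W2+z3*W3)^2
        = (z1*W2-z2*W1)^2 + (z1*W3-z3*W1)^2 + (z2*W3-z3*W2)^2"
      by (simp add: power2_eq_square algebra_simps)
    moreover have "(z1*W2-z2*W1)^2 + (z1*W3-z3*W1)^2 + (z2*W3-z3*W2)^2 \<ge> 0" by simp
    ultimately show ?thesis by linarith
  qed
  also have "\<dots> \<le> 1 * N^2"
    using assms by (intro mult_mono) auto
  finally have "(z1*W1+z2*W2+z3*W3)^2 \<le> N^2" by simp
  then have "\<bar>z1*W1+z2*W2+z3*W3\<bar> \<le> \<bar>N\<bar>" using abs_le_square_iff by blast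
  then show ?thesis using assms(3) by linarith
qed

lemma bl_density:
  assumes "z1^2+z2^2+z3^2 \<le> 1"
  shows "density (bl z1 z2 z3)"
proof -
  have "trace (bl z1 z2 z3) = 1" by (simp add: trace_def sum2 bl_def field_simps)
  moreover have "psd (bl z1 z2 z3)"
    unfolding psd_def Let_def
  proof
    fix v :: "complex^2"
    obtain p q where v0: "v$0 = Complex p q" using complex.exhaust by blast
    obtain r t where v1: "v$1 = Complex r t" using complex.exhaust by blast
    let ?Q = "\<Sum>i\<in>UNIV. \<Sum>j\<in>UNIV. cnj (v$i) * bl z1 z2 z3 $ i $ j * v$j"
    have im: "Im ?Q = 0" by (simp add: sum2 bl_def v0 v1 algebra_simps) (simp add: field_simps)
    have "Re ?Q = ((p^2+q^2+r^2+t^2) + z1 * (2*(p*r+q*t)) + z2 * (2*(p*t-q*r)) + z3 * (p^2+q^2-r^2-t^2))/2"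
      by (simp add: sum2 bl_def v0 v1 algebra_simps power2_eq_square) (simp add: field_simps)
    moreover have "(p^2+q^2+r^2+t^2) + z1 * (2*(p*r+q*t)) + z2 * (2*(p*t-q*r)) + z3 * (p^2+q^2-r^2-t^2) \<ge> 0"
      by (rule cs3[OF assms]) (auto simp: power2_eq_square algebra_simps)
    ultimately show "Im ?Q = 0 \<and> Re ?Q \<ge> 0" using im by simp
  qed
  ultimately show ?thesis by (simp add: density_def)
qed

lemma ptrace_st: "ptrace_E (st a b T) = bl (a 1) (a 2) (a 3)"
  apply (intro veqI) subgoal for i j
  by (cases i rule: c2; cases j rule: c2; simp add: ptrace_E_def sum2 st_ent pauli_def bl_def complex_eq_iff; simp add: field_simps)
  done

lemma kron_bl: "kron (bl (a 1) (a 2) (a 3)) (bl (z 1) (z 2) (z 3)) = st a z (\<lambda>i j. a i * z j)"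
  apply (intro veqI) subgoal for r c
  by (cases r rule: c22; cases c rule: c22; simp add: kron_def st_ent pauli_def bl_def complex_eq_iff algebra_simps; simp add: field_simps)
  done
definition EQ :: "real \<Rightarrow> real \<Rightarrow> real \<Rightarrow> real \<Rightarrow> real \<Rightarrow> real \<Rightarrow> (nat \<Rightarrow> real) \<Rightarrow> (nat \<Rightarrow> real) \<Rightarrow> (nat \<Rightarrow> real) \<Rightarrow> bool" where
  "EQ S1 S2 S3 C1 C2 C3 a b z \<longleftrightarrow>
     S1*S2*b 3 = S1*C2*a 2*z 1 - S2*C1*a 1*z 2 + S1*S2*z 3 \<and>
     S2*S3*b 1 = S2*C3*a 3*z 2 - S3*C2*a 2*z 3 + S2*S3*z 1 \<and>
     S3*S1*b 2 = S3*C1*a 1*z 3 - S1*C3*a 3*z 1 + S3*S1*z 2"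

lemma zexist:
  fixes S1 S2 S3 C1 C2 C3 :: real and a b :: "nat \<Rightarrow> real"
  shows "\<exists>z. EQ S1 S2 S3 C1 C2 C3 a b z \<and> (z 1)^2 + (z 2)^2 + (z 3)^2 \<le> (b 1)^2 + (b 2)^2 + (b 3)^2"
proof (cases "S1 = 0 \<or> S2 = 0 \<or> S3 = 0")
  case True
  then show ?thesis
  proof (elim disjE)
    assume h: "S1 = 0"
    show ?thesis by (rule exI[of _ "\<lambda>k. if k = 1 then b 1 else 0"]) (simp add: EQ_def h)
  next
    assume h: "S2 = 0"
    show ?thesis by (rule exI[of _ "\<lambda>k. if k = 2 then b 2 else 0"]) (simp add: EQ_def h)
  next
    assume h: "S3 = 0"
    show ?thesis by (rule exI[of _ "\<lambda>k. if k = 3 then b 3 else 0"]) (simp add: EQ_def h)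
  qed
next
  case False
  then have s1: "S1 \<noteq> 0" and s2: "S2 \<noteq> 0" and s3: "S3 \<noteq> 0" by auto
  define v1 where "v1 = C1 * a 1 / S1"
  define v2 where "v2 = C2 * a 2 / S2"
  define v3 where "v3 = C3 * a 3 / S3"
  define n where "n = 1 + v1^2 + v2^2 + v3^2"
  define vb where "vb = v1 * b 1 + v2 * b 2 + v3 * b 3"
  have n0: "n \<noteq> 0" unfolding n_def
    using zero_le_power2[of v1] zero_le_power2[of v2] zero_le_power2[of v3] by linarith
  define N1 where "N1 = b 1 + (v2 * b 3 - v3 * b 2) + vb * v1"
  define N2 where "N2 = b 2 + (v3 * b 1 - v1 * b 3) + vb * v2"
  define N3 where "N3 = b 3 + (v1 * b 2 - v2 * b 1) + vb * v3"
  define z :: "nat \<Rightarrow> real" where "z k = (if k = 1 then N1 / n else if k = 2 then N2 / n else N3 / n)" for k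
  have e1: "N1 = n * b 1 + (v2 * N3 - v3 * N2)"
    unfolding N1_def N2_def N3_def n_def vb_def by (simp add: algebra_simps power2_eq_square)
  have e2: "N2 = n * b 2 + (v3 * N1 - v1 * N3)"
    unfolding N1_def N2_def N3_def n_def vb_def by (simp add: algebra_simps power2_eq_square)
  have e3: "N3 = n * b 3 + (v1 * N2 - v2 * N1)"
    unfolding N1_def N2_def N3_def n_def vb_def by (simp add: algebra_simps power2_eq_square)
  have dv: "(n * B + (X * P - Y * Q)) / n = B + (X * (P / n) - Y * (Q / n))" for B X P Y Q
    using n0 by (simp add: field_simps)
  have zz: "z 1 = N1 / n" "z 2 = N2 / n" "z 3 = N3 / n" by (simp_all add: z_def)
  have z1: "z 1 = b 1 + (v2 * z 3 - v3 * z 2)"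
    unfolding zz by (subst e1, rule dv)
  have z2: "z 2 = b 2 + (v3 * z 1 - v1 * z 3)"
    unfolding zz by (subst e2, rule dv)
  have z3: "z 3 = b 3 + (v1 * z 2 - v2 * z 1)"
    unfolding zz by (subst e3, rule dv)
  have eq: "EQ S1 S2 S3 C1 C2 C3 a b z"
  proof -
    have "S1 * S2 * z 3 = S1 * S2 * b 3 + S2 * (S1 * v1) * z 2 - S1 * (S2 * v2) * z 1" by (subst z3) (simp add: algebra_simps)
    moreover have "S2 * S3 * z 1 = S2 * S3 * b 1 + S3 * (S2 * v2) * z 3 - S2 * (S3 * v3) * z 2" by (subst z1) (simp add: algebra_simps)
    moreover have "S3 * S1 * z 2 = S3 * S1 * b 2 + S1 * (S3 * v3) * z 1 - S3 * (S1 * v1) * z 3" by (subst z2) (simp add: algebra_simps)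
    moreover have "S1 * v1 = C1 * a 1" "S2 * v2 = C2 * a 2" "S3 * v3 = C3 * a 3" using s1 s2 s3 by (simp_all add: v1_def v2_def v3_def)
    ultimately show ?thesis unfolding EQ_def by (simp add: algebra_simps)
  qed
  have "(b 1)^2 + (b 2)^2 + (b 3)^2 = (z 1)^2 + (z 2)^2 + (z 3)^2
      + (v2 * z 3 - v3 * z 2)^2 + (v3 * z 1 - v1 * z 3)^2 + (v1 * z 2 - v2 * z 1)^2"
  proof -
    have "b 1 = z 1 - (v2 * z 3 - v3 * z 2)" "b 2 = z 2 - (v3 * z 1 - v1 * z 3)" "b 3 = z 3 - (v1 * z 2 - v2 * z 1)"
      using z1 z2 z3 by linarith+
    note bz = this
    show ?thesis unfolding bz by (simp add: power2_eq_square algebra_simps)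
  qed
  then have "(z 1)^2 + (z 2)^2 + (z 3)^2 \<le> (b 1)^2 + (b 2)^2 + (b 3)^2"
    by (smt (verit) zero_le_power2)
  then show ?thesis using eq by blast
qed
lemma bl_cong: "p1 = q1 \<Longrightarrow> p2 = q2 \<Longrightarrow> p3 = q3 \<Longrightarrow> bl p1 p2 p3 = bl q1 q2 q3" by simp

theorem theorem2:
  fixes a1 a2 a3 :: real and \<rho> :: qqmat
  assumes "density \<rho>"
    and "\<forall>i\<in>{1,2,3::nat}. \<forall>j\<in>{1,2,3::nat}. i \<noteq> j \<longrightarrow> corr \<rho> i j = 0"
  shows "\<exists>\<zeta>::qmat. density \<zeta> \<and>
    ptrace_E (Omega a1 a2 a3 ** \<rho> ** adjoint_mat (Omega a1 a2 a3))
    = ptrace_E (Omega a1 a2 a3 ** kron (ptrace_E \<rho>) \<zeta> ** adjoint_mat (Omega a1 a2 a3))"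
proof -
  have ps: "psd \<rho>" and tr: "trace \<rho> = 1" using assms(1) by (auto simp: density_def)
  have herm: "\<And>p q. \<rho>$q$p = cnj (\<rho>$p$q)" using psd_herm[OF ps] .
  have cz: "corr \<rho> 1 2 = 0" "corr \<rho> 1 3 = 0" "corr \<rho> 2 1 = 0" "corr \<rho> 2 3 = 0"
     "corr \<rho> 3 1 = 0" "corr \<rho> 3 2 = 0" using assms(2) by auto
  define A where "A = aof \<rho>"
  define B where "B = bof \<rho>"
  define Tm where "Tm = Tof \<rho>"
  have rho: "\<rho> = st A B Tm" unfolding A_def B_def Tm_def using decomp[OF herm tr cz] .
  have Toff: "Tm 1 2 = 0" "Tm 1 3 = 0" "Tm 2 1 = 0" "Tm 2 3 = 0" "Tm 3 1 = 0" "Tm 3 2 = 0"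
    by (simp_all add: Tm_def Tof_def)
  have bn: "(B 1)^2 + (B 2)^2 + (B 3)^2 \<le> 1" using bnorm ps rho by metis
  define x where "x = cos (a1 - a2)"
  define y where "y = sin (a1 - a2)"
  define u where "u = cos (a1 + a2)"
  define v where "v = sin (a1 + a2)"
  define c where "c = cos a3"
  define s where "s = sin a3"
  have r1: "x^2 + y^2 = 1" "u^2+v^2 = 1" "c^2 + s^2 = 1"
    by (simp_all add: x_def y_def u_def v_def c_def s_def sin_cos_squared_add add.commute)
  have Om: "Omega a1 a2 a3 = OmA x y u v c s"
  proof -
    have "cis (-a3) = Complex c (-s)" "cis a3 = Complex c s" by (simp_all add: complex_eq_iff c_def s_def)
    then show ?thesis unfolding Om_explicit OmA_def x_def y_def u_def v_def by simp
  qed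
  obtain z where EQz: "EQ (v * x + u * y) (v * x - u * y) (2 * s * c) (u * x - v * y) (u * x + v * y) (c^2 - s^2) A B z"
    and zn: "(z 1)^2 + (z 2)^2 + (z 3)^2 \<le> (B 1)^2 + (B 2)^2 + (B 3)^2"
    using zexist by blast
  note Es = EQz[unfolded EQ_def]
  note E3 = conjunct1[OF Es] and E1 = conjunct1[OF conjunct2[OF Es]] and E2 = conjunct2[OF conjunct2[OF Es]]
  define \<zeta> where "\<zeta> = bl (z 1) (z 2) (z 3)"
  have dz: "density \<zeta>" unfolding \<zeta>_def using bl_density zn bn by (meson order_trans)
  have prod: "kron (ptrace_E \<rho>) \<zeta> = st A z (\<lambda>i j. A i * z j)"
    unfolding \<zeta>_def rho ptrace_st kron_bl ..
  have L: "ptrace_E (Omega a1 a2 a3 ** \<rho> ** adjoint_mat (Omega a1 a2 a3))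
     = ptrace_E (Omega a1 a2 a3 ** kron (ptrace_E \<rho>) \<zeta> ** adjoint_mat (Omega a1 a2 a3))"
    unfolding prod Om unfolding rho core[OF r1]
    apply (rule bl_cong)
      apply (simp only: Toff E1 E2 E3 mult_zero_right mult_zero_left diff_zero add_0_right; simp add: algebra_simps)
     apply (simp only: Toff E1 E2 E3 mult_zero_right mult_zero_left diff_zero add_0_right; simp add: algebra_simps)
    apply (simp only: Toff E1 E2 E3 mult_zero_right mult_zero_left diff_zero add_0_right; simp add: algebra_simps)
    done
  show ?thesis using dz L by blast
qed

end
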